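(* Assume $T_B\colon\mathcal D(T_B)\to Y_B$ is bijective. Then for each $n\in\mathbb Z$, $X=X(n)\oplus Z(n)$.
   Context: $B$ is an admissible Banach sequence space: a complete normed space $B$ of real sequences $(s_n)_{n\in\mathbb Z}$ such that $\mathbf{s}'\in B$, $|s_n|\le|s'_n|$ for all $n$ imply $\mathbf{s}\in B$, $\|\mathbf{s}\|_B\le\|\mathbf{s}'\|_B$; $\chi_{\{n\}}\in B$ with $\|\chi_{\{n\}}\|_B>0$ for all $n$; and shifts $(s_{n+m})_n$ of elements of $B$ are in $B$ with norm at most $N\|\mathbf{s}\|_B$ for a fixed $N>0$. $X$ is a Banach space with norms $\|\cdot\|_n$ ($n\in\mathbb Z$) each equivalent to its norm; $(A_m)_{m\in\mathbb Z}$ are bounded linear operators on $X$. $Y_B$ is the Banach space of sequences $\mathbf{x}=(x_n)_{n\in\mathbb Z}$ in $X$ with $(\|x_n\|_n)_n\in B$, normed by $\|(\|x_n\|_n)_n\|_B$; $(T_B\mathbf{x})_n=x_n-A_{n-1}x_{n-1}$ on $\mathcal D(T_B)=\{\mathbf{x}\in Y_B:T_B\mathbf{x}\in Y_B\}$. For $n\in\mathbb Z$, $X(n)$ is the set of $x\in X$ for which there is $\mathbf{x}=(x_m)_m\in Y_B$ with $x_n=x$ and $x_m=A_{m-1}x_{m-1}$ for all $m>n$; $Z(n)$ is the set of $x\in X$ for which there is $\mathbf{z}=(z_m)_m\in Y_B$ with $z_n=x$ and $z_m=A_{m-1}z_{m-1}$ for all $m\le n$. *)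

theory Defs
  imports "HOL-Analysis.Analysis"
begin

definition admissible_space :: "(int \<Rightarrow> real) set \<Rightarrow> ((int \<Rightarrow> real) \<Rightarrow> real) \<Rightarrow> bool" where
  "admissible_space B nB \<longleftrightarrow>
     (\<forall>s\<in>B. \<forall>t\<in>B. (\<lambda>n. s n + t n) \<in> B) \<and>
     (\<forall>c. \<forall>s\<in>B. (\<lambda>n. c * s n) \<in> B) \<and>
     (\<forall>s\<in>B. nB s \<ge> 0) \<and>
     (\<forall>s\<in>B. nB s = 0 \<longleftrightarrow> s = (\<lambda>n. 0)) \<and>
     (\<forall>c. \<forall>s\<in>B. nB (\<lambda>n. c * s n) = \<bar>c\<bar> * nB s) \<and>
     (\<forall>s\<in>B. \<forall>t\<in>B. nB (\<lambda>n. s n + t n) \<le> nB s + nB t) \<and>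
     (\<forall>f :: nat \<Rightarrow> int \<Rightarrow> real. (\<forall>k. f k \<in> B) \<and>
        (\<forall>e>0. \<exists>N. \<forall>k\<ge>N. \<forall>l\<ge>N. nB (\<lambda>n. f k n - f l n) < e) \<longrightarrow>
        (\<exists>s\<in>B. (\<lambda>k. nB (\<lambda>n. f k n - s n)) \<longlonglongrightarrow> 0)) \<and>
     (\<forall>s s'. s' \<in> B \<and> (\<forall>n. \<bar>s n\<bar> \<le> \<bar>s' n\<bar>) \<longrightarrow> s \<in> B \<and> nB s \<le> nB s') \<and>
     (\<forall>n. (\<lambda>m. if m = n then 1 else 0) \<in> B \<and> nB (\<lambda>m. if m = n then 1 else 0) > 0) \<and>
     (\<exists>N>0. \<forall>s\<in>B. \<forall>m. (\<lambda>n. s (n + m)) \<in> B \<and> nB (\<lambda>n. s (n + m)) \<le> N * nB s)"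

definition equiv_norm_family :: "(int \<Rightarrow> 'a::real_normed_vector \<Rightarrow> real) \<Rightarrow> bool" where
  "equiv_norm_family nX \<longleftrightarrow> (\<forall>n.
     (\<forall>x. nX n x \<ge> 0) \<and> (\<forall>x. nX n x = 0 \<longleftrightarrow> x = 0) \<and>
     (\<forall>c x. nX n (c *\<^sub>R x) = \<bar>c\<bar> * nX n x) \<and>
     (\<forall>x y. nX n (x + y) \<le> nX n x + nX n y) \<and>
     (\<exists>c d. c > 0 \<and> d > 0 \<and> (\<forall>x. c * norm x \<le> nX n x \<and> nX n x \<le> d * norm x)))"

definition Y_B :: "(int \<Rightarrow> real) set \<Rightarrow> (int \<Rightarrow> 'a \<Rightarrow> real) \<Rightarrow> (int \<Rightarrow> 'a) set" where
  "Y_B B nX = {x. (\<lambda>n. nX n (x n)) \<in> B}"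

definition T_op :: "(int \<Rightarrow> 'a \<Rightarrow> 'a::real_vector) \<Rightarrow> (int \<Rightarrow> 'a) \<Rightarrow> (int \<Rightarrow> 'a)" where
  "T_op A x = (\<lambda>n. x n - A (n - 1) (x (n - 1)))"

definition dom_T :: "(int \<Rightarrow> real) set \<Rightarrow> (int \<Rightarrow> 'a \<Rightarrow> real) \<Rightarrow> (int \<Rightarrow> 'a \<Rightarrow> 'a::real_vector) \<Rightarrow> (int \<Rightarrow> 'a) set" where
  "dom_T B nX A = {x \<in> Y_B B nX. T_op A x \<in> Y_B B nX}"

definition Xn :: "(int \<Rightarrow> real) set \<Rightarrow> (int \<Rightarrow> 'a \<Rightarrow> real) \<Rightarrow> (int \<Rightarrow> 'a \<Rightarrow> 'a) \<Rightarrow> int \<Rightarrow> 'a set" where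
  "Xn B nX A n = {x. \<exists>xs \<in> Y_B B nX. xs n = x \<and> (\<forall>m>n. xs m = A (m - 1) (xs (m - 1)))}"

definition Zn :: "(int \<Rightarrow> real) set \<Rightarrow> (int \<Rightarrow> 'a \<Rightarrow> real) \<Rightarrow> (int \<Rightarrow> 'a \<Rightarrow> 'a) \<Rightarrow> int \<Rightarrow> 'a set" where
  "Zn B nX A n = {x. \<exists>zs \<in> Y_B B nX. zs n = x \<and> (\<forall>m\<le>n. zs m = A (m - 1) (zs (m - 1)))}"

end

theory Submission
  imports Defs
begin

theorem lemma3p5:
  fixes B :: "(int \<Rightarrow> real) set" and nB :: "(int \<Rightarrow> real) \<Rightarrow> real"
    and nX :: "int \<Rightarrow> 'a::banach \<Rightarrow> real" and A :: "int \<Rightarrow> 'a \<Rightarrow> 'a"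
  assumes "admissible_space B nB"
    and "equiv_norm_family nX"
    and "\<And>m. bounded_linear (A m)"
    and "bij_betw (T_op A) (dom_T B nX A) (Y_B B nX)"
  shows "\<forall>n. (\<forall>x. \<exists>u\<in>Xn B nX A n. \<exists>v\<in>Zn B nX A n. x = u + v)
           \<and> Xn B nX A n \<inter> Zn B nX A n = {0}"
proof -
  have addB: "\<And>s t. s \<in> B \<Longrightarrow> t \<in> B \<Longrightarrow> (\<lambda>n. s n + t n) \<in> B"
    using assms(1) unfolding admissible_space_def by blast
  have scB: "\<And>c s. s \<in> B \<Longrightarrow> (\<lambda>n. c * s n) \<in> B"
    using assms(1) unfolding admissible_space_def by blast
  have latB: "\<And>s s'. s' \<in> B \<Longrightarrow> (\<forall>n. \<bar>s n\<bar> \<le> \<bar>s' n\<bar>) \<Longrightarrow> s \<in> B"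
    using assms(1) unfolding admissible_space_def by blast
  have chiB: "\<And>n. (\<lambda>m. if m = n then 1 else 0) \<in> B"
    using assms(1) unfolding admissible_space_def by blast
  have nn: "\<And>n x. nX n x \<ge> 0"
    using assms(2) unfolding equiv_norm_family_def by blast
  have n0: "\<And>n. nX n 0 = 0"
    using assms(2) unfolding equiv_norm_family_def by blast
  have nsc: "\<And>n c x. nX n (c *\<^sub>R x) = \<bar>c\<bar> * nX n x"
    using assms(2) unfolding equiv_norm_family_def by blast
  have ntri: "\<And>n x y. nX n (x + y) \<le> nX n x + nX n y"
    using assms(2) unfolding equiv_norm_family_def by blast
  have nneg: "\<And>n x. nX n (- x) = nX n x"
    using nsc[of _ "-1"] by simp
  have ndiff: "\<And>n x y. nX n (x - y) \<le> nX n x + nX n y"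
    using ntri nneg by (metis diff_conv_add_uminus)
  have lin: "\<And>m. linear (A m)" using assms(3) bounded_linear.linear by blast
  have A0: "\<And>m. A m 0 = 0" using lin linear_0 by blast
  have Aneg: "\<And>m x. A m (- x) = - A m x" using lin linear_neg by blast
  have dom: "\<And>z s t. s \<in> Y_B B nX \<Longrightarrow> t \<in> Y_B B nX \<Longrightarrow>
      (\<forall>m. nX m (z m) \<le> nX m (s m) + nX m (t m)) \<Longrightarrow> z \<in> Y_B B nX"
  proof -
    fix z s t assume s: "s \<in> Y_B B nX" and t: "t \<in> Y_B B nX"
      and le: "\<forall>m. nX m (z m) \<le> nX m (s m) + nX m (t m)"
    have "(\<lambda>m. nX m (s m) + nX m (t m)) \<in> B" using s t addB unfolding Y_B_def by auto
    moreover have "\<forall>m. \<bar>nX m (z m)\<bar> \<le> \<bar>nX m (s m) + nX m (t m)\<bar>"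
      using le nn by (smt (verit))
    ultimately show "z \<in> Y_B B nX" using latB unfolding Y_B_def by auto
  qed
  have zeroY: "(\<lambda>m. 0) \<in> Y_B B nX"
    using scB[OF chiB, of 0] by (simp add: Y_B_def n0)
  have surj: "T_op A ` dom_T B nX A = Y_B B nX" using assms(4) bij_betw_imp_surj_on by blast
  have inj: "inj_on (T_op A) (dom_T B nX A)" using assms(4) bij_betw_imp_inj_on by blast
  show ?thesis
  proof (intro allI conjI)
    fix n x
    define y where "y = (\<lambda>m::int. if m = n then x else (0::'a))"
    have yY: "y \<in> Y_B B nX"
    proof -
      have "(\<lambda>m. nX n x * (if m = n then 1 else 0)) \<in> B" using scB[OF chiB] .
      moreover have "\<forall>m. \<bar>nX m (y m)\<bar> \<le> \<bar>nX n x * (if m = n then 1 else 0)\<bar>"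
        by (simp add: y_def n0)
      ultimately show ?thesis using latB unfolding Y_B_def by auto
    qed
    then obtain w where w: "w \<in> dom_T B nX A" "T_op A w = y" using surj by force
    have wY: "w \<in> Y_B B nX" using w(1) unfolding dom_T_def by auto
    have wT: "\<And>m. w m - A (m - 1) (w (m - 1)) = y m"
      using w(2) unfolding T_op_def by (simp add: fun_eq_iff)
    have u: "w n \<in> Xn B nX A n"
    proof -
      have "\<forall>m>n. w m = A (m - 1) (w (m - 1))"
      proof (intro allI impI)
        fix m assume "m > n"
        hence "w m - A (m - 1) (w (m - 1)) = 0" using wT[of m] by (simp add: y_def)
        thus "w m = A (m - 1) (w (m - 1))" by simp
      qed
      thus ?thesis unfolding Xn_def using wY by blast
    qed
    define z where "z = (\<lambda>m. if m \<le> n then -(w m - y m) else 0)"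
    have zY: "z \<in> Y_B B nX"
    proof (rule dom[OF wY yY], intro allI)
      fix m
      show "nX m (z m) \<le> nX m (w m) + nX m (y m)"
      proof (cases "m \<le> n")
        case True
        hence "nX m (z m) = nX m (w m - y m)" unfolding z_def using True nneg[of m "w m - y m"] by (simp only: if_True)
        thus ?thesis using ndiff by simp
      next
        case False
        thus ?thesis by (simp add: z_def n0 nn add_nonneg_nonneg)
      qed
    qed
    have zrec: "\<forall>m\<le>n. z m = A (m - 1) (z (m - 1))"
    proof (intro allI impI)
      fix m assume "m \<le> n"
      hence "z m = - A (m - 1) (w (m - 1))" using wT[of m] by (simp add: z_def algebra_simps)
      moreover have "z (m - 1) = - w (m - 1)" using \<open>m \<le> n\<close> by (simp add: z_def y_def)
      ultimately show "z m = A (m - 1) (z (m - 1))" by (simp add: Aneg)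
    qed
    have v: "z n \<in> Zn B nX A n" unfolding Zn_def using zY zrec by blast
    have "x = w n + z n" by (simp add: z_def y_def)
    thus "\<exists>u\<in>Xn B nX A n. \<exists>v\<in>Zn B nX A n. x = u + v" using u v by blast
  next
    fix n
    show "Xn B nX A n \<inter> Zn B nX A n = {0}"
    proof
      show "{0} \<subseteq> Xn B nX A n \<inter> Zn B nX A n"
        using zeroY A0 unfolding Xn_def Zn_def by auto
    next
      show "Xn B nX A n \<inter> Zn B nX A n \<subseteq> {0}"
      proof
        fix x assume "x \<in> Xn B nX A n \<inter> Zn B nX A n"
        then obtain xs zs where xs: "xs \<in> Y_B B nX" "xs n = x" "\<forall>m>n. xs m = A (m - 1) (xs (m - 1))"
          and zs: "zs \<in> Y_B B nX" "zs n = x" "\<forall>m\<le>n. zs m = A (m - 1) (zs (m - 1))"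
          unfolding Xn_def Zn_def by blast
        define w where "w = (\<lambda>m. if m \<ge> n then xs m else zs m)"
        have wY: "w \<in> Y_B B nX"
          by (rule dom[OF xs(1) zs(1)]) (simp add: w_def nn)
        have Tw: "T_op A w = (\<lambda>m. 0)"
        proof
          fix m
          consider "m > n" | "m = n" | "m < n" by linarith
          thus "T_op A w m = 0"
          proof cases
            case 1 thus ?thesis using xs(3)[rule_format, of m] by (simp add: T_op_def w_def)
          next
            case 2 thus ?thesis using zs(2) zs(3)[rule_format, of n] xs(2) by (simp add: T_op_def w_def)
          next
            case 3 thus ?thesis using zs(3)[rule_format, of m] by (simp add: T_op_def w_def)
          qed
        qed
        have wd: "w \<in> dom_T B nX A" using wY Tw zeroY by (simp add: dom_T_def)
        have 0: "(\<lambda>m. 0) \<in> dom_T B nX A" using zeroY by (simp add: dom_T_def T_op_def A0)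
        have T0: "T_op A (\<lambda>m. 0) = (\<lambda>m. 0)" by (simp add: T_op_def A0)
        have "w = (\<lambda>m. 0)" using inj wd 0 Tw T0 by (metis inj_on_def)
        hence "w n = 0" by simp
        thus "x \<in> {0}" using xs(2) by (simp add: w_def)
      qed
    qed
  qed
qed

end
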